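(* Let $t$ be a positive integer, let $v$ be a positive integer, let $a_1$ be an invertible element of $\mathbb{Z}_v$ and let $d$ be a divisor of $v$ such that $v\ge d\,t(2t+1)$. Let $W=\{0,a_1,2a_1,\dots,ta_1\}\subseteq\mathbb{Z}_v$ be the set of vertices of the walk $(0,a_1,2a_1,\dots,ta_1)$. Then either $W\cap\{1,2,\dots,dt\}=\emptyset$ or $W\cap\{-1,-2,\dots,-dt\}=\emptyset$ (as subsets of $\mathbb{Z}_v$). *)

theory Defs
  imports Main
begin

end

theory Submission
  imports Defs
begin

theorem lemma3p1:
  fixes t v d :: nat and a1 :: int
  assumes "t > 0" and "v > 0" and "coprime a1 (int v)" and "d dvd v"
    and "v \<ge> d * t * (2 * t + 1)"
  defines "W \<equiv> {(int k * a1) mod int v | k. k \<le> t}"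
  shows "W \<inter> {int i mod int v | i. 1 \<le> i \<and> i \<le> d * t} = {}
       \<or> W \<inter> {(- int i) mod int v | i. 1 \<le> i \<and> i \<le> d * t} = {}"
proof (rule ccontr)
  assume "\<not> ?thesis"
  then obtain k i k' j where k: "k \<le> t" and i: "1 \<le> i" "i \<le> d * t"
    and e1: "(int k * a1) mod int v = int i mod int v"
    and k': "k' \<le> t" and j: "1 \<le> j" "j \<le> d * t"
    and e2: "(int k' * a1) mod int v = (- int j) mod int v"
    unfolding W_def by blast
  have dpos: "d > 0" using i by (cases d) auto
  have "d * t * 1 < d * t * (2 * t + 1)" using dpos assms(1) by simp
  hence dtv: "d * t < v" using assms(5) by linarith
  have d1: "int v dvd int k * a1 - int i" using e1 by (simp add: mod_eq_dvd_iff)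
  have d2: "int v dvd int k' * a1 + int j" using e2 by (simp add: mod_eq_dvd_iff)
  have "int v dvd int k' * (int k * a1 - int i)" using d1 by simp
  moreover have "int v dvd int k * (int k' * a1 + int j)" using d2 by simp
  ultimately have "int v dvd int k * (int k' * a1 + int j) - int k' * (int k * a1 - int i)"
    using dvd_diff by blast
  hence dd: "int v dvd int (k * j + k' * i)" by (simp add: algebra_simps)
  show False
  proof (cases "k = 0 \<or> k' = 0")
    case True
    then show ?thesis
    proof
      assume "k = 0"
      hence "int v dvd int i" using d1 by simp
      hence "v dvd i" by simp
      thus False using i dtv by (auto dest: dvd_imp_le)
    next
      assume "k' = 0"
      hence "int v dvd int j" using d2 by simp
      hence "v dvd j" by simp
      thus False using j dtv by (auto dest: dvd_imp_le)
    qed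
  next
    case False
    hence pos: "k * j + k' * i > 0" using i j by simp
    have "k * j \<le> t * (d * t)" using k j by (intro mult_le_mono) auto
    moreover have "k' * i \<le> t * (d * t)" using k' i by (intro mult_le_mono) auto
    moreover have "t * (d * t) + t * (d * t) < d * t * (2 * t + 1)"
      using dpos assms(1) by (simp add: algebra_simps)
    ultimately have "k * j + k' * i < v" using assms(5) by linarith
    moreover have "v dvd k * j + k' * i" using dd by (simp only: of_nat_dvd_iff)
    ultimately show False using pos by (auto dest: dvd_imp_le)
  qed
qed

end
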